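(* Let $d \geq 2$, $N, K \geq 1$ be integers, $\mathbf{y}_1,\ldots,\mathbf{y}_N \in \mathbb{R}^d$ with matrix $\mathbf{Y} = [\mathbf{y}_1,\ldots,\mathbf{y}_N]$, and $\rho_k^{[i]} \geq 0$ with $\sum_{k=1}^K \rho_k^{[i]} = 1$ for each $i$. Put $\mathbf{A}_k = \sum_{i} \rho_k^{[i]}\mathbf{y}_i\mathbf{y}_i^\mathrm{T}$, $\gamma_k = \sum_i \rho_k^{[i]}$, $\lambda_k = $ largest eigenvalue of $\mathbf{A}_k$. For $S \subseteq [K]$ define $\sigma^2(S) = \big(\|\mathbf{Y}\|_\mathrm{F}^2 - \sum_{k\in S}\lambda_k\big)/\big(dN - \sum_{k\in S}\gamma_k\big)$ and $g(S) = \big[dN - \sum_{k\in S}\gamma_k\big]\ln\sigma^2(S) + \sum_{k\in S}\gamma_k\ln(\lambda_k/\gamma_k)$, and assume $\gamma_k>0$, $\lambda_k>0$ for all $k$ and $\sigma^2(S)>0$ for all $S\subseteq[K]$. Let $\mathcal{V} = \{S \subseteq [K] : \sigma^2(S) \leq \lambda_k/\gamma_k \text{ for all } k \in S\}$. Then there exists a minimizer $\hat{S}$ of $g$ over $\mathcal{V}$ that is saturated, i.e. $\hat{S} \in \mathcal{V}$ and $\sigma^2(\hat{S}) > \lambda_j/\gamma_j$ for all $j \in [K]\setminus\hat{S}$.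
   Context: $[K] = \{1,\ldots,K\}$; $\|\cdot\|_\mathrm{F}$ is the Frobenius norm. *)

theory Defs
  imports "HOL-Analysis.Analysis"
begin

definition outer_prod :: "real^'d \<Rightarrow> real^'d \<Rightarrow> real^'d^'d" where
  "outer_prod u v = (\<chi> i j. u $ i * v $ j)"

definition largest_eigenvalue :: "real^'d^'d \<Rightarrow> real" where
  "largest_eigenvalue M = Max {l. \<exists>v. v \<noteq> 0 \<and> M *v v = l *\<^sub>R v}"

text \<open>A_k = sum_i rho_k^[i] y_i y_i^T, indices i in {1..N}; rho k i stands for rho_k^[i].\<close>
definition Amat :: "nat \<Rightarrow> (nat \<Rightarrow> real^'d) \<Rightarrow> (nat \<Rightarrow> nat \<Rightarrow> real) \<Rightarrow> nat \<Rightarrow> real^'d^'d" where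
  "Amat N y rho k = (\<Sum>i\<in>{1..N}. rho k i *\<^sub>R outer_prod (y i) (y i))"

definition gam :: "nat \<Rightarrow> (nat \<Rightarrow> nat \<Rightarrow> real) \<Rightarrow> nat \<Rightarrow> real" where
  "gam N rho k = (\<Sum>i\<in>{1..N}. rho k i)"

definition lam :: "nat \<Rightarrow> (nat \<Rightarrow> real^'d) \<Rightarrow> (nat \<Rightarrow> nat \<Rightarrow> real) \<Rightarrow> nat \<Rightarrow> real" where
  "lam N y rho k = largest_eigenvalue (Amat N y rho k)"

definition frob_sq :: "nat \<Rightarrow> (nat \<Rightarrow> real^'d) \<Rightarrow> real" where
  "frob_sq N y = (\<Sum>i\<in>{1..N}. \<Sum>j\<in>UNIV. (y i $ j)^2)"

definition sigma2 :: "nat \<Rightarrow> (nat \<Rightarrow> real^'d) \<Rightarrow> (nat \<Rightarrow> nat \<Rightarrow> real) \<Rightarrow> nat set \<Rightarrow> real" where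
  "sigma2 N y rho S =
     (frob_sq N y - (\<Sum>k\<in>S. lam N y rho k)) /
     (real CARD('d) * real N - (\<Sum>k\<in>S. gam N rho k))"

definition gfun :: "nat \<Rightarrow> (nat \<Rightarrow> real^'d) \<Rightarrow> (nat \<Rightarrow> nat \<Rightarrow> real) \<Rightarrow> nat set \<Rightarrow> real" where
  "gfun N y rho S =
     (real CARD('d) * real N - (\<Sum>k\<in>S. gam N rho k)) * ln (sigma2 N y rho S)
     + (\<Sum>k\<in>S. gam N rho k * ln (lam N y rho k / gam N rho k))"

definition Vset :: "nat \<Rightarrow> nat \<Rightarrow> (nat \<Rightarrow> real^'d) \<Rightarrow> (nat \<Rightarrow> nat \<Rightarrow> real) \<Rightarrow> nat set set" where
  "Vset K N y rho = {S. S \<subseteq> {1..K} \<and>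
      (\<forall>k\<in>S. sigma2 N y rho S \<le> lam N y rho k / gam N rho k)}"

end

theory Submission
  imports Defs
begin

lemma key:
  fixes n m a b :: real
  assumes "n>0" "m>0" "a>0" "b>0"
  shows "n * ln(m/n) + a*ln(b/a) \<le> (n+a)*ln((m+b)/(n+a))"
proof -
  define M where "M = (m+b)/(n+a)"
  have M: "M > 0" using assms by (simp add: M_def)
  have e1: "ln (m/n) = ln (m/(n*M)) + ln M" using assms M
    by (simp add: ln_div ln_mult)
  have e2: "ln (b/a) = ln (b/(a*M)) + ln M" using assms M
    by (simp add: ln_div ln_mult)
  have i1: "ln (m/(n*M)) \<le> m/(n*M) - 1" using assms M by (intro ln_le_minus_one) simp
  have i2: "ln (b/(a*M)) \<le> b/(a*M) - 1" using assms M by (intro ln_le_minus_one) simp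
  have j1: "n * ln (m/(n*M)) \<le> m/M - n"
  proof -
    have "n * ln (m/(n*M)) \<le> n * (m/(n*M) - 1)" using mult_left_mono[OF i1, of n] assms by simp
    also have "\<dots> = m/M - n" using assms M by (simp add: field_simps)
    finally show ?thesis .
  qed
  have j2: "a * ln (b/(a*M)) \<le> b/M - a"
  proof -
    have "a * ln (b/(a*M)) \<le> a * (b/(a*M) - 1)" using mult_left_mono[OF i2, of a] assms by simp
    also have "\<dots> = b/M - a" using assms M by (simp add: field_simps)
    finally show ?thesis .
  qed
  have s0: "(m+b)/M = n + a" using assms by (simp add: M_def field_simps)
  have s: "m/M + b/M = n + a" using s0 by (simp add: add_divide_distrib)
  have "n * ln(m/n) + a*ln(b/a) = n * ln (m/(n*M)) + a * ln (b/(a*M)) + (n+a) * ln M"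
    unfolding e1 e2 by (simp add: algebra_simps)
  also have "\<dots> \<le> (n+a) * ln M" using j1 j2 s by linarith
  finally show ?thesis by (simp add: M_def)
qed

lemma abstract:
  fixes I :: "nat set" and ga la :: "nat \<Rightarrow> real" and D F :: real
  assumes fin: "finite I"
    and gpos: "\<forall>k\<in>I. ga k > 0" and lpos: "\<forall>k\<in>I. la k > 0"
    and npos: "\<forall>S. S \<subseteq> I \<longrightarrow> D - sum ga S > 0"
    and mpos: "\<forall>S. S \<subseteq> I \<longrightarrow> F - sum la S > 0"
  shows "\<exists>S\<in>{S. S \<subseteq> I \<and> (\<forall>k\<in>S. (F - sum la S)/(D - sum ga S) \<le> la k / ga k)}.
     (\<forall>T\<in>{S. S \<subseteq> I \<and> (\<forall>k\<in>S. (F - sum la S)/(D - sum ga S) \<le> la k / ga k)}.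
        (D - sum ga S) * ln ((F - sum la S)/(D - sum ga S)) + (\<Sum>k\<in>S. ga k * ln (la k / ga k))
        \<le> (D - sum ga T) * ln ((F - sum la T)/(D - sum ga T)) + (\<Sum>k\<in>T. ga k * ln (la k / ga k))) \<and>
     (\<forall>j\<in>I - S. (F - sum la S)/(D - sum ga S) > la j / ga j)"
proof -
  define s where "s = (\<lambda>S. (F - sum la S)/(D - sum ga S))"
  define G where "G = (\<lambda>S. (D - sum ga S) * ln (s S) + (\<Sum>k\<in>S. ga k * ln (la k / ga k)))"
  define V where "V = {S. S \<subseteq> I \<and> (\<forall>k\<in>S. s S \<le> la k / ga k)}"
  have step: "G (insert j S) \<le> G S \<and> (s S \<le> la j / ga j \<longrightarrow> s (insert j S) \<le> s S)"
    if SI: "S \<subseteq> I" and j: "j \<in> I" "j \<notin> S" for S j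
  proof -
    have finS: "finite S" using SI fin finite_subset by blast
    define n where "n = D - sum ga S"
    define m where "m = F - sum la S"
    define a where "a = ga j"
    define b where "b = la j"
    have ins1: "sum ga (insert j S) = a + sum ga S" using finS j by (simp add: a_def)
    have ins2: "sum la (insert j S) = b + sum la S" using finS j by (simp add: b_def)
    have ins3: "(\<Sum>k\<in>insert j S. ga k * ln (la k / ga k)) = a * ln (b/a) + (\<Sum>k\<in>S. ga k * ln (la k / ga k))"
      using finS j by (simp add: a_def b_def)
    have jS: "insert j S \<subseteq> I" using SI j by blast
    have n1: "n - a > 0" using npos[rule_format, OF jS] ins1 by (simp add: n_def)
    have m1: "m - b > 0" using mpos[rule_format, OF jS] ins2 by (simp add: m_def)
    have a0: "a > 0" using gpos j by (simp add: a_def)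
    have b0: "b > 0" using lpos j by (simp add: b_def)
    have K: "(n-a) * ln((m-b)/(n-a)) + a*ln(b/a) \<le> ((n-a)+a)*ln(((m-b)+b)/((n-a)+a))"
      by (rule key[OF n1 m1 a0 b0])
    have sI: "s (insert j S) = (m-b)/(n-a)" unfolding s_def ins1 ins2 m_def n_def by (simp add: algebra_simps)
    have sS: "s S = m/n" by (simp add: s_def m_def n_def)
    have GI: "G (insert j S) = (n-a) * ln((m-b)/(n-a)) + a*ln(b/a) + (\<Sum>k\<in>S. ga k * ln (la k / ga k))"
      unfolding G_def sI ins1 ins3 by (simp add: n_def algebra_simps)
    have GS: "G S = n * ln(m/n) + (\<Sum>k\<in>S. ga k * ln (la k / ga k))"
      unfolding G_def sS by (simp add: n_def)
    have g: "G (insert j S) \<le> G S" using K GI GS by simp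
    have "s (insert j S) \<le> s S" if h: "s S \<le> la j / ga j"
    proof -
      have "m/n \<le> b/a" using h sS by (simp add: a_def b_def)
      hence "m * a \<le> b * n" using a0 n1 a0 by (simp add: field_simps)
      hence "(m-b) * n \<le> m * (n-a)" by (simp add: algebra_simps)
      hence "(m-b)/(n-a) \<le> m/n" using n1 a0 by (simp add: field_simps)
      thus ?thesis using sI sS by simp
    qed
    thus ?thesis using g by blast
  qed
  have finV: "finite V" unfolding V_def using fin by (simp add: finite_subset)
  have eV: "{} \<in> V" unfolding V_def by simp
  obtain S0 where S0: "S0 \<in> V" "\<forall>T\<in>V. G S0 \<le> G T"
  proof -
    have "Min (G ` V) \<in> G ` V" using finV eV by (intro Min_in) auto
    then obtain S0 where "S0 \<in> V" "G S0 = Min (G ` V)" by auto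
    moreover have "\<forall>T\<in>V. Min (G ` V) \<le> G T" using finV by simp
    ultimately show ?thesis using that by metis
  qed
  define Mn where "Mn = {S\<in>V. \<forall>T\<in>V. G S \<le> G T}"
  have finM: "finite Mn" using finV by (simp add: Mn_def)
  have neM: "Mn \<noteq> {}" using S0 Mn_def by blast
  obtain S where SM: "S \<in> Mn" and Smax: "\<forall>T\<in>Mn. card T \<le> card S"
  proof -
    have "Max (card ` Mn) \<in> card ` Mn" using finM neM by simp
    then obtain S where "S \<in> Mn" "card S = Max (card ` Mn)" by auto
    moreover have "\<forall>T\<in>Mn. card T \<le> Max (card ` Mn)" using finM by simp
    ultimately show ?thesis using that by metis
  qed
  have SV: "S \<in> V" and Smin: "\<forall>T\<in>V. G S \<le> G T" using SM Mn_def by auto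
  have SI: "S \<subseteq> I" using SV V_def by auto
  have sat: "s S > la j / ga j" if j: "j \<in> I - S" for j
  proof (rule ccontr)
    assume "\<not> s S > la j / ga j"
    hence le: "s S \<le> la j / ga j" by simp
    have st: "G (insert j S) \<le> G S" "s (insert j S) \<le> s S"
      using step[OF SI, of j] j le by auto
    have "insert j S \<in> V" unfolding V_def
    proof (intro CollectI conjI ballI)
      show "insert j S \<subseteq> I" using SI j by blast
    next
      fix k assume "k \<in> insert j S"
      then show "s (insert j S) \<le> la k / ga k"
      proof
        assume "k = j" thus ?thesis using st le by simp
      next
        assume "k \<in> S" hence "s S \<le> la k / ga k" using SV unfolding V_def by blast
        thus ?thesis using st by linarith
      qed
    qed
    hence "insert j S \<in> Mn" unfolding Mn_def using Smin st(1) by (auto intro: order_trans)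
    hence "card (insert j S) \<le> card S" using Smax by blast
    moreover have "finite S" using SI fin finite_subset by blast
    ultimately show False using j by simp
  qed
  show ?thesis using SV Smin sat unfolding V_def G_def s_def by blast
qed

theorem lemma4:
  fixes y :: "nat \<Rightarrow> real^'d" and rho :: "nat \<Rightarrow> nat \<Rightarrow> real" and N K :: nat
  assumes "CARD('d) \<ge> 2" and "N \<ge> 1" and "K \<ge> 1"
    and "\<And>k i. k \<in> {1..K} \<Longrightarrow> i \<in> {1..N} \<Longrightarrow> rho k i \<ge> 0"
    and "\<And>i. i \<in> {1..N} \<Longrightarrow> (\<Sum>k\<in>{1..K}. rho k i) = 1"
    and "\<And>k. k \<in> {1..K} \<Longrightarrow> gam N rho k > 0"
    and "\<And>k. k \<in> {1..K} \<Longrightarrow> (lam N y rho k :: real) > 0"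
    and "\<And>S. S \<subseteq> {1..K} \<Longrightarrow> sigma2 N y rho S > 0"
  shows "\<exists>S\<in>Vset K N y rho.
           (\<forall>T\<in>Vset K N y rho. gfun N y rho S \<le> gfun N y rho T) \<and>
           (\<forall>j\<in>{1..K} - S. sigma2 N y rho S > lam N y rho j / gam N rho j)"
proof -
  define D where "D = real CARD('d) * real N"
  have tot: "(\<Sum>k\<in>{1..K}. gam N rho k) = real N"
  proof -
    have "(\<Sum>k\<in>{1..K}. gam N rho k) = (\<Sum>i\<in>{1..N}. \<Sum>k\<in>{1..K}. rho k i)"
      unfolding gam_def by (rule sum.swap)
    also have "\<dots> = (\<Sum>i\<in>{1..N}. (1::real))" using assms(5) by simp
    finally show ?thesis by simp
  qed
  have npos: "\<forall>S. S \<subseteq> {1..K} \<longrightarrow> D - sum (gam N rho) S > 0"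
  proof (intro allI impI)
    fix S assume S: "S \<subseteq> {1..K}"
    have "sum (gam N rho) S \<le> (\<Sum>k\<in>{1..K}. gam N rho k)"
      using S assms(6) by (intro sum_mono2) (auto intro: less_imp_le)
    moreover have "D \<ge> 2 * real N" unfolding D_def using assms(1)
      by (intro mult_right_mono) auto
    ultimately show "D - sum (gam N rho) S > 0" using tot assms(2) by simp
  qed
  have mpos: "\<forall>S. S \<subseteq> {1..K} \<longrightarrow> frob_sq N y - sum (lam N y rho) S > 0"
  proof (intro allI impI)
    fix S assume S: "S \<subseteq> {1..K}"
    have "sigma2 N y rho S > 0" using assms(8) S by blast
    hence "(frob_sq N y - sum (lam N y rho) S) / (D - sum (gam N rho) S) > 0"
      unfolding sigma2_def D_def by simp
    moreover have "D - sum (gam N rho) S > 0" using npos S by blast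
    ultimately show "frob_sq N y - sum (lam N y rho) S > 0"
      by (simp add: zero_less_divide_iff)
  qed
  show ?thesis
    using abstract[of "{1..K}" "gam N rho" "lam N y rho" D "frob_sq N y"] npos mpos assms(6,7)
    unfolding Vset_def gfun_def sigma2_def D_def by auto
qed

end
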